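(* Let $\mathcal{H}$ be a finite-dimensional Hilbert space, let $P$ be an orthogonal projection on $\mathcal{H}$ and $Q = 1 - P$. Let $\mathcal{L}(\rho) = -i[H,\rho] + \sum_{\ell}\mathcal{D}[F^{\ell}](\rho)$ be a Lindbladian with Hermitian $H$ and jump operators $F^\ell$, such that $\mathcal{L}$ admits a unique decoherence-free subspace with projection $P$ (i.e. the steady states/kernel of $\mathcal{L}$ are exactly the operators $\rho = P\rho P$), and such that $H = QHQ$ and $F^{\ell} = PF^{\ell}Q$ for all $\ell$. Perturb $H \to H + V$ with $V$ Hermitian and $F^\ell \to F^\ell + f^\ell$ with arbitrary operators $f^\ell$, and let $\mathcal{L}_{\mathrm{eff}} = \mathcal{P}_\infty \mathcal{O}\mathcal{P}_\infty - \mathcal{P}_\infty \mathcal{O}_1 \mathcal{L}^{-1}\mathcal{O}_1 \mathcal{P}_\infty$ be the effective (second-order) generator, with $\mathcal{O},\mathcal{O}_1,\mathcal{P}_\infty,\mathcal{L}^{-1}$ as in the context. Then for every operator $\rho$ with $\rho = P\rho P$, $$\mathcal{L}_{\mathrm{eff}}(\rho) = -i[H_{\mathrm{eff}},\rho] + \sum_\ell \mathcal{D}[F^\ell_{\mathrm{eff}}](\rho) + \mathcal{E}_{\mathrm{eff}}(\rho) - \tfrac12\{\mathcal{E}_{\mathrm{eff}}^{\ddagger}(I),\rho\},$$ where $$H_{\mathrm{eff}} = \tfrac12\left(V_{\mathrm{ul}} - K_{\mathrm{eff}}K^{-1}K_{\mathrm{eff}}\right) + \tfrac12\left(V_{\mathrm{ul}}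 - K_{\mathrm{eff}}K^{-1}K_{\mathrm{eff}}\right)^{\dagger},$$ $$F^\ell_{\mathrm{eff}} = f^\ell_{\mathrm{ul}} - F^\ell K^{-1}K_{\mathrm{eff}},$$ $$\mathcal{E}_{\mathrm{eff}}(\rho) = -\sum_{\ell,\ell'} F^{\ell'}\,\mathcal{K}^{-1}\!\left(f^\ell_{\mathrm{ll}}\,\rho\, f^{\ell\dagger}_{\mathrm{ll}}\right)F^{\ell'\dagger}.$$
   Context: $\mathcal{D}[F](\rho) = F\rho F^\dagger - \tfrac12\{F^\dagger F,\rho\}$. Block notation: for an operator $O$, $O_{\mathrm{ul}} = POP$, $O_{\mathrm{ur}} = POQ$, $O_{\mathrm{ll}} = QOP$, $O_{\mathrm{lr}} = QOQ$, and $O_{\mathrm{of}} = O_{\mathrm{ur}} + O_{\mathrm{ll}}$. The perturbation superoperator is $\mathcal{O} = \mathcal{L}' - \mathcal{L}$, where $\mathcal{L}'(\rho) = -i[H+V,\rho] + \sum_\ell \mathcal{D}[F^\ell + f^\ell](\rho)$; it splits as $\mathcal{O} = \mathcal{O}_1 + \mathcal{O}_2$, with $\mathcal{O}_1$ the part linear in $(V,f^\ell)$, namely $\mathcal{O}_1(\rho) = -i[V,\rho] + \sum_\ell\big(F^\ell\rho f^{\ell\dagger} + f^\ell\rho F^{\ell\dagger} - \tfrac12\{F^{\ell\dagger}f^\ell + f^{\ell\dagger}F^\ell,\rho\}\big)$, and $\mathcal{O}_2 = \sum_\ell \mathcal{D}[f^\ell]$. $\mathcal{L}^{-1}$ is the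 Drazin pseudoinverse of $\mathcal{L}$, and $\mathcal{P}_\infty = \mathcal{I} - \mathcal{L}\mathcal{L}^{-1}$ is the projection onto the steady states of $\mathcal{L}$ (equivalently $\mathcal{P}_\infty = \lim_{t\to\infty} e^{t\mathcal{L}}$). The Kamiltonians are $K = H - \tfrac{i}{2}\sum_\ell F^{\ell\dagger}F^\ell$ (which satisfies $K = QKQ$) and $K_{\mathrm{eff}} = V_{\mathrm{of}} - \tfrac{i}{2}\sum_\ell\big(F^{\ell\dagger}f^\ell_{\mathrm{ul}} + f^{\ell\dagger}_{\mathrm{ul}}F^\ell\big)$. $K^{-1}$ denotes the inverse of $K$ restricted to the range of $Q$ (extended by zero on the range of $P$). $\mathcal{K}$ is the superoperator $\mathcal{K}(X) = -i(KX - XK^\dagger)$, and $\mathcal{K}^{-1}$ is its inverse on operators $X = QXQ$. For a superoperator $\mathcal{E}(\cdot) = \sum_i A_i(\cdot)B_i^\dagger$, its adjoint is $\mathcal{E}^{\ddagger}(\cdot) = \sum_i A_i^\dagger(\cdot)B_i$. *)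

theory Defs
  imports "HOL-Analysis.Analysis"
begin

text \<open>Operators on a finite-dimensional Hilbert space C^n are complex n x n matrices,
  with the dimension given by a finite type 'n. Superoperators are functions on matrices.\<close>


definition adj :: "complex^('n::finite)^'n \<Rightarrow> complex^('n::finite)^'n" where
  "adj A = (\<chi> i j. cnj (A$j$i))"

definition scal :: "complex \<Rightarrow> complex^('n::finite)^'n \<Rightarrow> complex^('n::finite)^'n" where
  "scal c A = (\<chi> i j. c * A$i$j)"

definition comm :: "complex^('n::finite)^'n \<Rightarrow> complex^('n::finite)^'n \<Rightarrow> complex^('n::finite)^'n" where
  "comm A B = A ** B - B ** A"

definition acomm :: "complex^('n::finite)^'n \<Rightarrow> complex^('n::finite)^'n \<Rightarrow> complex^('n::finite)^'n" where
  "acomm A B = A ** B + B ** A"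

definition hermitian :: "complex^('n::finite)^'n \<Rightarrow> bool" where
  "hermitian A \<longleftrightarrow> adj A = A"

definition orth_proj :: "complex^('n::finite)^'n \<Rightarrow> bool" where
  "orth_proj P \<longleftrightarrow> P ** P = P \<and> adj P = P"

definition diss :: "complex^('n::finite)^'n \<Rightarrow> (complex^('n::finite)^'n \<Rightarrow> complex^'n^'n)" where
  "diss F \<rho> = F ** \<rho> ** adj F - scal (1/2) (acomm (adj F ** F) \<rho>)"

definition lindblad :: "complex^('n::finite)^'n \<Rightarrow> (nat \<Rightarrow> complex^('n::finite)^'n) \<Rightarrow> nat \<Rightarrow> (complex^('n::finite)^'n \<Rightarrow> complex^'n^'n)" where
  "lindblad H F m \<rho> = scal (-\<i>) (comm H \<rho>) + (\<Sum>l<m. diss (F l) \<rho>)"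

definition superop_linear :: "(complex^('n::finite)^'n \<Rightarrow> complex^'n^'n) \<Rightarrow> bool" where
  "superop_linear T \<longleftrightarrow> (\<forall>A B. T (A + B) = T A + T B) \<and> (\<forall>c A. T (scal c A) = scal c (T A))"

definition drazin :: "(complex^('n::finite)^'n \<Rightarrow> complex^'n^'n) \<Rightarrow> (complex^('n::finite)^'n \<Rightarrow> complex^'n^'n)" where
  "drazin L = (THE X. superop_linear X \<and> X \<circ> L \<circ> X = X \<and> L \<circ> X = X \<circ> L \<and>
                      (\<exists>k. (L ^^ Suc k) \<circ> X = L ^^ k))"

definition Pinf :: "(complex^('n::finite)^'n \<Rightarrow> complex^'n^'n) \<Rightarrow> (complex^('n::finite)^'n \<Rightarrow> complex^'n^'n)" where
  "Pinf L \<rho> = \<rho> - L (drazin L \<rho>)"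

text \<open>Adjoint of a superoperator w.r.t. the Hilbert-Schmidt inner product
  (for E = sum A_i (.) B_i^dag this is E^ddag = sum A_i^dag (.) B_i).\<close>
definition hs_adjoint :: "(complex^('n::finite)^'n \<Rightarrow> complex^'n^'n) \<Rightarrow> (complex^('n::finite)^'n \<Rightarrow> complex^'n^'n)" where
  "hs_adjoint E = (THE G. \<forall>A B. trace (adj A ** E B) = trace (adj (G A) ** B))"

definition O1 :: "complex^('n::finite)^'n \<Rightarrow> (nat \<Rightarrow> complex^('n::finite)^'n) \<Rightarrow> (nat \<Rightarrow> complex^('n::finite)^'n) \<Rightarrow> nat \<Rightarrow> (complex^('n::finite)^'n \<Rightarrow> complex^'n^'n)" where
  "O1 V F f m \<rho> = scal (-\<i>) (comm V \<rho>) +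
     (\<Sum>l<m. F l ** \<rho> ** adj (f l) + f l ** \<rho> ** adj (F l)
             - scal (1/2) (acomm (adj (F l) ** f l + adj (f l) ** F l) \<rho>))"

definition Leff :: "complex^('n::finite)^'n \<Rightarrow> (nat \<Rightarrow> complex^('n::finite)^'n) \<Rightarrow> complex^('n::finite)^'n \<Rightarrow> (nat \<Rightarrow> complex^('n::finite)^'n) \<Rightarrow> nat \<Rightarrow> (complex^('n::finite)^'n \<Rightarrow> complex^'n^'n)" where
  "Leff H F V f m \<rho> =
     (let L = lindblad H F m;
          Lp = lindblad (H + V) (\<lambda>l. F l + f l) m;
          Opert = (\<lambda>X. Lp X - L X)
      in Pinf L (Opert (Pinf L \<rho>)) - Pinf L (O1 V F f m (drazin L (O1 V F f m (Pinf L \<rho>)))))"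

definition Kam :: "complex^('n::finite)^'n \<Rightarrow> (nat \<Rightarrow> complex^('n::finite)^'n) \<Rightarrow> nat \<Rightarrow> complex^('n::finite)^'n" where
  "Kam H F m = H - scal (\<i>/2) (\<Sum>l<m. adj (F l) ** F l)"

definition Keff :: "complex^('n::finite)^'n \<Rightarrow> complex^('n::finite)^'n \<Rightarrow> (nat \<Rightarrow> complex^('n::finite)^'n) \<Rightarrow> (nat \<Rightarrow> complex^('n::finite)^'n) \<Rightarrow> nat \<Rightarrow> complex^('n::finite)^'n" where
  "Keff P V F f m =
     (let Q = mat 1 - P
      in P ** V ** Q + Q ** V ** P
         - scal (\<i>/2) (\<Sum>l<m. adj (F l) ** (P ** f l ** P) + adj (P ** f l ** P) ** F l))"

definition Kinv :: "complex^('n::finite)^'n \<Rightarrow> complex^('n::finite)^'n \<Rightarrow> complex^('n::finite)^'n" where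
  "Kinv Q K = (THE Y. Y = Q ** Y ** Q \<and> Y ** K = Q \<and> K ** Y = Q)"

definition Ksup :: "complex^('n::finite)^'n \<Rightarrow> (complex^('n::finite)^'n \<Rightarrow> complex^'n^'n)" where
  "Ksup K X = scal (-\<i>) (K ** X - X ** adj K)"

definition Ksupinv :: "complex^('n::finite)^'n \<Rightarrow> complex^('n::finite)^'n \<Rightarrow> (complex^('n::finite)^'n \<Rightarrow> complex^'n^'n)" where
  "Ksupinv Q K X = (THE Y. Y = Q ** Y ** Q \<and> Ksup K Y = X)"

end

theory Submission imports Defs begin


type_synonym 'n cm = "complex^'n^'n"

lemma mm_assoc: "(A ** B) ** C = A ** (B ** (C::'n::finite cm))"
  by (simp add: matrix_mul_assoc)
lemma mm_ldist: "A ** (B + C) = A ** B + A ** (C::'n::finite cm)"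
  by (simp add: matrix_add_ldistrib)
lemma mm_rdist: "(A + B) ** C = A ** C + B ** (C::'n::finite cm)"
  by (simp add: matrix_matrix_mult_def vec_eq_iff algebra_simps sum.distrib)
lemma mm_ldiff: "A ** (B - C) = A ** B - A ** (C::'n::finite cm)"
  by (simp add: matrix_matrix_mult_def vec_eq_iff algebra_simps sum_subtractf)
lemma mm_rdiff: "(A - B) ** C = A ** C - B ** (C::'n::finite cm)"
  by (simp add: matrix_matrix_mult_def vec_eq_iff algebra_simps sum_subtractf)
lemma mm_lneg: "(- A) ** C = - (A ** (C::'n::finite cm))"
  by (simp add: matrix_matrix_mult_def vec_eq_iff sum_negf)
lemma mm_rneg: "A ** (- C) = - (A ** (C::'n::finite cm))"
  by (simp add: matrix_matrix_mult_def vec_eq_iff sum_negf)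
lemma mm_lzero: "(0::'n::finite cm) ** C = 0"
  by (simp add: matrix_matrix_mult_def vec_eq_iff)
lemma mm_rzero: "C ** (0::'n::finite cm) = 0"
  by (simp add: matrix_matrix_mult_def vec_eq_iff)
lemma mm_lsum: "(\<Sum>i\<in>I. f i) ** (C::'n::finite cm) = (\<Sum>i\<in>I. f i ** C)"
  by (induction I rule: infinite_finite_induct) (auto simp: mm_lzero mm_rdist)
lemma mm_rsum: "(C::'n::finite cm) ** (\<Sum>i\<in>I. f i) = (\<Sum>i\<in>I. C ** f i)"
  by (induction I rule: infinite_finite_induct) (auto simp: mm_rzero matrix_add_ldistrib)

lemma scal_lmul: "scal c A ** B = scal c (A ** (B::'n::finite cm))"
  by (simp add: scal_def matrix_matrix_mult_def vec_eq_iff sum_distrib_left mult.assoc)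
lemma scal_rmul: "A ** scal c B = scal c (A ** (B::'n::finite cm))"
  by (simp add: scal_def matrix_matrix_mult_def vec_eq_iff sum_distrib_left mult.left_commute)
lemma scal_scal: "scal a (scal b A) = scal (a*b) (A::'n::finite cm)"
  by (simp add: scal_def vec_eq_iff mult.assoc)
lemma scal_add: "scal c (A + B) = scal c A + scal c (B::'n::finite cm)"
  by (simp add: scal_def vec_eq_iff algebra_simps)
lemma scal_diff: "scal c (A - B) = scal c A - scal c (B::'n::finite cm)"
  by (simp add: scal_def vec_eq_iff algebra_simps)
lemma scal_neg: "scal c (- A) = - scal c (A::'n::finite cm)"
  by (simp add: scal_def vec_eq_iff algebra_simps)
lemma scal_zero: "scal c (0::'n::finite cm) = 0"
  by (simp add: scal_def vec_eq_iff)
lemma scal_zero2: "scal 0 (A::'n::finite cm) = 0"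
  by (simp add: scal_def vec_eq_iff)
lemma scal_one: "scal 1 (A::'n::finite cm) = A"
  by (simp add: scal_def vec_eq_iff)
lemma scal_minus_c: "scal (- c) (A::'n::finite cm) = - scal c A"
  by (simp add: scal_def vec_eq_iff)
lemma scal_sum: "scal c (\<Sum>i\<in>I. f i) = (\<Sum>i\<in>I. scal c (f i::'n::finite cm))"
  by (induction I rule: infinite_finite_induct) (auto simp: scal_zero scal_add)
lemma scal_addc: "scal (a + b) (A::'n::finite cm) = scal a A + scal b A"
  by (simp add: scal_def vec_eq_iff algebra_simps)
lemma scaleR_scal: "c *\<^sub>R (A::'n::finite cm) = scal (of_real c) A"
proof -
  have e: "c *\<^sub>R z = complex_of_real c * z" for z::complex by (simp add: scaleR_conv_of_real)
  show ?thesis by (simp only: vec_eq_iff scal_def vector_scaleR_component vec_lambda_beta e) simp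
qed

lemma adj_mm: "adj (A ** B) = adj B ** adj (A::'n::finite cm)"
  by (simp add: adj_def matrix_matrix_mult_def vec_eq_iff mult.commute)
lemma adj_add: "adj (A + B) = adj A + adj (B::'n::finite cm)"
  by (simp add: adj_def vec_eq_iff)
lemma adj_diff: "adj (A - B) = adj A - adj (B::'n::finite cm)"
  by (simp add: adj_def vec_eq_iff)
lemma adj_neg: "adj (- A) = - adj (A::'n::finite cm)"
  by (simp add: adj_def vec_eq_iff)
lemma adj_zero: "adj (0::'n::finite cm) = 0"
  by (simp add: adj_def vec_eq_iff)
lemma adj_adj: "adj (adj A) = (A::'n::finite cm)"
  by (simp add: adj_def vec_eq_iff)
lemma adj_scal: "adj (scal c A) = scal (cnj c) (adj (A::'n::finite cm))"
  by (simp add: adj_def scal_def vec_eq_iff)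
lemma adj_one: "adj (mat 1 :: 'n::finite cm) = mat 1"
  by (simp add: adj_def mat_def vec_eq_iff)
lemma adj_sum: "adj (\<Sum>i\<in>I. f i) = (\<Sum>i\<in>I. adj (f i::'n::finite cm))"
  by (induction I rule: infinite_finite_induct) (auto simp: adj_zero adj_add)

lemmas mm_simps = mm_assoc mm_ldist mm_rdist mm_ldiff mm_rdiff mm_lneg mm_rneg mm_lzero mm_rzero
  mm_lsum mm_rsum scal_lmul scal_rmul scal_scal scal_add scal_diff scal_neg scal_zero scal_zero2
  scal_one scal_sum scal_minus_c adj_mm adj_add adj_diff adj_neg adj_zero adj_adj adj_scal adj_one adj_sum


definition nrm :: "'n::finite cm \<Rightarrow> real" where
  "nrm A = (\<Sum>i\<in>UNIV. \<Sum>j\<in>UNIV. (cmod (A$i$j))^2)"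

lemma trace_adj_self: "trace (adj A ** A) = complex_of_real (nrm (A::'n::finite cm))"
proof -
  have "trace (adj A ** A) = (\<Sum>i\<in>UNIV. \<Sum>j\<in>UNIV. cnj (A$j$i) * A$j$i)"
    by (simp add: trace_def adj_def matrix_matrix_mult_def)
  also have "\<dots> = (\<Sum>i\<in>UNIV. \<Sum>j\<in>UNIV. complex_of_real ((cmod (A$j$i))^2))"
    by (intro sum.cong refl) (metis complex_norm_square mult.commute of_real_power)
  also have "\<dots> = complex_of_real (\<Sum>i\<in>UNIV. \<Sum>j\<in>UNIV. (cmod (A$j$i))^2)"
    by simp
  also have "(\<Sum>i\<in>UNIV. \<Sum>j\<in>UNIV. (cmod (A$j$i))^2) = nrm A"
    unfolding nrm_def by (rule sum.swap)
  finally show ?thesis .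
qed

lemma nrm_nonneg: "nrm A \<ge> 0"
  unfolding nrm_def by (intro sum_nonneg) auto

lemma nrm_zero: "nrm (A::'n::finite cm) = 0 \<Longrightarrow> A = 0"
proof -
  assume h: "nrm A = 0"
  have "\<forall>i\<in>UNIV. (\<Sum>j\<in>UNIV. (cmod (A$i$j))^2) = 0"
    using h unfolding nrm_def by (subst sum_nonneg_eq_0_iff[symmetric]) (auto intro: sum_nonneg)
  then have "\<forall>i j. (cmod (A$i$j))^2 = 0"
    by (simp add: sum_nonneg_eq_0_iff)
  then show "A = 0" by (simp add: vec_eq_iff)
qed

lemma trace_adj_self_zero: "trace (adj A ** A) = 0 \<Longrightarrow> (A::'n::finite cm) = 0"
  using trace_adj_self[of A] nrm_zero by (metis of_real_eq_0_iff)

lemma trace_add': "trace (A + B) = trace A + trace (B::'n::finite cm)"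
  by (simp add: trace_def sum.distrib)
lemma trace_diff': "trace (A - B) = trace A - trace (B::'n::finite cm)"
  by (simp add: trace_def sum_subtractf)
lemma trace_neg': "trace (- A) = - trace (A::'n::finite cm)"
  by (simp add: trace_def sum_negf)
lemma trace_zero': "trace (0::'n::finite cm) = 0"
  by (simp add: trace_def)
lemma trace_scal: "trace (scal c A) = c * trace (A::'n::finite cm)"
  by (simp add: trace_def scal_def sum_distrib_left)
lemma trace_sum: "trace (\<Sum>i\<in>I. f i) = (\<Sum>i\<in>I. trace (f i::'n::finite cm))"
  by (induction I rule: infinite_finite_induct) (auto simp: trace_zero' trace_add')
lemma trace_adj: "trace (adj A) = cnj (trace (A::'n::finite cm))"
  by (simp add: trace_def adj_def)
lemma trace_comm: "trace (A ** B) = trace (B ** (A::'n::finite cm))"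
  by (rule trace_mul_sym)

lemmas tr_simps = trace_add' trace_diff' trace_neg' trace_zero' trace_scal trace_sum


lemma rz: "A ** B = 0 \<Longrightarrow> A ** (B ** X) = (0::'n::finite cm)"
  by (metis matrix_mul_assoc mm_lzero)
lemma ri: "A ** B = C \<Longrightarrow> A ** (B ** X) = C ** (X::'n::finite cm)"
  by (metis matrix_mul_assoc)
lemma scal_eq0: "c \<noteq> 0 \<Longrightarrow> scal c Z = 0 \<Longrightarrow> (Z::'n::finite cm) = 0"
  by (simp add: scal_def vec_eq_iff)

definition Ssup :: "(nat \<Rightarrow> 'n::finite cm) \<Rightarrow> nat \<Rightarrow> 'n cm \<Rightarrow> 'n cm" where
  "Ssup F m X = (\<Sum>l<m. F l ** X ** adj (F l))"

locale dfs =
  fixes P Q H :: "'n::finite cm" and F :: "nat \<Rightarrow> 'n cm" and m :: nat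
  assumes PP: "P ** P = P" and adjP: "adj P = P"
  and Qdef: "Q = mat 1 - P"
  and Hh: "adj H = H"
  and HQ: "H = Q ** H ** Q"
  and FPQ: "\<And>l. F l = P ** F l ** Q"
  and DFS: "\<And>\<rho>. lindblad H F m \<rho> = 0 \<longleftrightarrow> \<rho> = P ** \<rho> ** P"
begin

lemma PQ: "P ** Q = 0" by (simp add: Qdef mm_ldiff PP)
lemma QP: "Q ** P = 0" by (simp add: Qdef mm_rdiff PP)
lemma QQ: "Q ** Q = Q" by (simp add: Qdef mm_rdiff mm_ldiff PP)
lemma adjQ: "adj Q = Q" by (simp add: Qdef adj_diff adj_one adjP)
lemma PQsum: "P + Q = mat 1" by (simp add: Qdef)

lemma FP: "F l ** P = 0" by (subst FPQ) (simp add: mm_assoc QP mm_rzero)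
lemma QF: "Q ** F l = 0" by (subst FPQ) (simp add: QP mm_lzero flip: mm_assoc)
lemma PF: "P ** F l = F l" by (metis FPQ PP matrix_mul_assoc)
lemma FQ: "F l ** Q = F l" by (metis FPQ QQ matrix_mul_assoc)
lemma PFa: "P ** adj (F l) = 0" by (metis FQ QP adj_mm adjP adjQ adj_zero mm_assoc mm_rzero FP)
lemma FaQ: "adj (F l) ** Q = 0" by (metis QF adj_mm adjQ adj_zero)
lemma QFa: "Q ** adj (F l) = adj (F l)" by (metis FQ adj_mm adjQ)
lemma FaP: "adj (F l) ** P = adj (F l)" by (metis PF adj_mm adjP)
lemma PH: "P ** H = 0" by (subst HQ) (simp add: PQ mm_lzero flip: mm_assoc)
lemma HP: "H ** P = 0" by (subst HQ) (simp add: QP mm_rzero mm_assoc)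
lemma QH: "Q ** H = H" by (metis HQ QQ matrix_mul_assoc)
lemma HQ': "H ** Q = H" by (metis HQ QQ matrix_mul_assoc)

lemmas blk0 = PP PQ QP QQ FP QF PF FQ PFa FaQ QFa FaP PH HP QH HQ'
lemmas blk = blk0 PP[THEN ri] PQ[THEN rz] QP[THEN rz] QQ[THEN ri] FP[THEN rz] QF[THEN rz]
  PF[THEN ri] FQ[THEN ri] PFa[THEN rz] FaQ[THEN rz] QFa[THEN ri] FaP[THEN ri]
  PH[THEN rz] HP[THEN rz] QH[THEN ri] HQ'[THEN ri] adjP adjQ Hh

definition "T = (\<Sum>l<m. adj (F l) ** F l)"
definition "K = Kam H F m"
abbreviation "S \<equiv> Ssup F m"

lemma K_def': "K = H - scal (\<i>/2) T" by (simp add: K_def Kam_def T_def)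
lemma adjT: "adj T = T" by (simp add: T_def mm_simps)
lemma adjK: "adj K = H + scal (\<i>/2) T"
  by (simp add: K_def' mm_simps adjT Hh scal_minus_c)

lemma TP: "T ** P = 0" by (simp add: T_def mm_simps blk)
lemma PT: "P ** T = 0" by (simp add: T_def mm_simps blk)
lemma QT: "Q ** T = T" by (simp add: T_def mm_simps blk)
lemma TQ: "T ** Q = T" by (simp add: T_def mm_simps blk)
lemma KP: "K ** P = 0" by (simp add: K_def' mm_simps blk TP)
lemma PK: "P ** K = 0" by (simp add: K_def' mm_simps blk PT)
lemma QK: "Q ** K = K" by (simp add: K_def' mm_simps blk QT)
lemma KQ: "K ** Q = K" by (simp add: K_def' mm_simps blk TQ)
lemma KaP: "adj K ** P = 0" by (metis PK adj_mm adjP adj_zero)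
lemma PKa: "P ** adj K = 0" by (metis KP adj_mm adjP adj_zero)
lemma QKa: "Q ** adj K = adj K" by (metis KQ adj_mm adjQ)
lemma KaQ: "adj K ** Q = adj K" by (metis QK adj_mm adjQ)

lemmas blkK = TP PT QT TQ KP PK QK KQ KaP PKa QKa KaQ
  TP[THEN rz] PT[THEN rz] QT[THEN ri] TQ[THEN ri] KP[THEN rz] PK[THEN rz] QK[THEN ri] KQ[THEN ri]
  KaP[THEN rz] PKa[THEN rz] QKa[THEN ri] KaQ[THEN ri]

lemma L_split: "lindblad H F m X = Ksup K X + S X"
  by (simp add: lindblad_def diss_def comm_def acomm_def Ksup_def K_def' adjK Ssup_def T_def
      mm_simps sum.distrib sum_subtractf sum_negf Hh)

end


context dfs begin

lemma trace_T_sand: "trace (adj Y ** (T ** Y)) = complex_of_real (\<Sum>l<m. nrm (F l ** Y))"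
proof -
  have "trace (adj Y ** (T ** Y)) = (\<Sum>l<m. trace (adj (F l ** Y) ** (F l ** Y)))"
    by (simp add: T_def mm_simps tr_simps)
  also have "\<dots> = (\<Sum>l<m. complex_of_real (nrm (F l ** Y)))"
    by (simp add: trace_adj_self)
  finally show ?thesis by simp
qed

lemma trace_T_sand2: "trace (adj Y ** (Y ** T)) = complex_of_real (\<Sum>l<m. nrm (F l ** adj Y))"
proof -
  have "trace (adj Y ** (Y ** T)) = (\<Sum>l<m. trace (adj Y ** (Y ** adj (F l) ** F l)))"
    by (simp add: T_def mm_simps tr_simps)
  also have "\<dots> = (\<Sum>l<m. trace (adj (F l ** adj Y) ** (F l ** adj Y)))"
    by (intro sum.cong refl, subst trace_comm) (simp add: mm_simps)
  also have "\<dots> = (\<Sum>l<m. complex_of_real (nrm (F l ** adj Y)))"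
    by (simp add: trace_adj_self)
  finally show ?thesis by simp
qed

lemma ker_Ksup:
  assumes "Ksup K Y = 0" shows "Y = P ** Y ** P"
proof -
  have E: "K ** Y - Y ** adj K = 0"
    by (rule scal_eq0[of "-\<i>"]) (use assms in \<open>simp_all add: Ksup_def\<close>)
  have E2: "H ** Y - Y ** H = scal (\<i>/2) (T ** Y) + scal (\<i>/2) (Y ** T)"
    using E by (simp add: K_def' adjK mm_simps algebra_simps Hh adjT)
  define a where "a = trace (adj Y ** (H ** Y))"
  define b where "b = trace (adj Y ** (Y ** H))"
  define s1 where "s1 = (\<Sum>l<m. nrm (F l ** Y))"
  define s2 where "s2 = (\<Sum>l<m. nrm (F l ** adj Y))"
  have s1n: "s1 \<ge> 0" unfolding s1_def by (intro sum_nonneg) (simp add: nrm_nonneg)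
  have s2n: "s2 \<ge> 0" unfolding s2_def by (intro sum_nonneg) (simp add: nrm_nonneg)
  have "trace (adj Y ** (H ** Y - Y ** H)) = trace (adj Y ** (scal (\<i>/2) (T ** Y) + scal (\<i>/2) (Y ** T)))"
    using E2 by simp
  then have tr: "a - b = (\<i>/2) * (complex_of_real s1 + complex_of_real s2)"
    unfolding a_def b_def s1_def s2_def
    by (simp add: mm_simps tr_simps trace_T_sand trace_T_sand2 algebra_simps)
  have ca: "cnj a = a" unfolding a_def
    by (simp add: trace_adj[symmetric] mm_simps Hh)
  have cb: "cnj b = b" unfolding b_def
    by (simp add: trace_adj[symmetric] mm_simps Hh) (subst trace_comm, simp add: mm_simps)
  have "Im (a - b) = 0" using ca cb by (metis Reals_cnj_iff complex_is_Real_iff Im_complex_of_real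
      minus_complex.sel(2) diff_self)
  then have "s1 + s2 = 0" using tr by simp
  then have z1: "s1 = 0" and z2: "s2 = 0" using s1n s2n by linarith+
  have FY: "F l ** Y = 0" if "l < m" for l
  proof -
    have "nrm (F l ** Y) = 0"
      using z1 unfolding s1_def using that by (subst (asm) sum_nonneg_eq_0_iff) (auto simp: nrm_nonneg)
    then show ?thesis by (rule nrm_zero)
  qed
  have YF: "Y ** adj (F l) = 0" if "l < m" for l
  proof -
    have "nrm (F l ** adj Y) = 0"
      using z2 unfolding s2_def using that by (subst (asm) sum_nonneg_eq_0_iff) (auto simp: nrm_nonneg)
    then have "F l ** adj Y = 0" by (rule nrm_zero)
    then have "adj (F l ** adj Y) = 0" by (simp add: adj_zero)
    then show ?thesis by (simp add: mm_simps)
  qed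
  have TY: "T ** Y = 0" unfolding T_def by (simp add: mm_simps FY)
  have YT: "Y ** T = 0" unfolding T_def
    by (simp add: mm_simps) (intro sum.neutral ballI, simp add: YF[THEN rz])
  have HY: "H ** Y - Y ** H = 0" using E2 TY YT by (simp add: scal_zero)
  have "lindblad H F m Y = 0"
    unfolding lindblad_def diss_def comm_def acomm_def
    using HY by (simp add: mm_simps scal_zero, intro sum.neutral ballI)
      (simp add: FY FY[THEN rz] YF YF[THEN rz] mm_lzero mm_rzero scal_zero)
  then show ?thesis using DFS by simp
qed

end


lemma linear_cm:
  fixes f :: "'n::finite cm \<Rightarrow> 'n cm"
  assumes "\<And>A B. f (A + B) = f A + f B" "\<And>c A. f (scal c A) = scal c (f A)"
  shows "linear f"
  by (rule linearI) (simp_all add: assms scaleR_scal)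

lemma inj_cm:
  fixes f :: "'n::finite cm \<Rightarrow> 'n cm"
  assumes add: "\<And>A B. f (A + B) = f A + f B" and z: "\<And>X. f X = 0 \<Longrightarrow> X = 0"
  shows "inj f"
proof (rule injI)
  fix x y assume "f x = f y"
  have "f (x - y) + f y = f x" using add[of "x - y" y] by simp
  then have "f (x - y) = 0" using \<open>f x = f y\<close> by simp
  then show "x = y" using z by fastforce
qed

lemma surj_cm:
  fixes f :: "'n::finite cm \<Rightarrow> 'n cm"
  assumes "\<And>A B. f (A + B) = f A + f B" "\<And>c A. f (scal c A) = scal c (f A)"
    and "\<And>X. f X = 0 \<Longrightarrow> X = 0"
  shows "\<exists>X. f X = Y"
proof -
  have "surj f" by (rule linear_inj_imp_surj[OF linear_cm inj_cm]) (fact assms)+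
  then show ?thesis by (metis surjD)
qed

lemma Ksup_add: "Ksup K (A + B) = Ksup K A + Ksup K B"
  by (simp add: Ksup_def mm_simps algebra_simps)
lemma Ksup_diff: "Ksup K (A - B) = Ksup K A - Ksup K B"
  by (simp add: Ksup_def mm_simps algebra_simps)
lemma Ksup_scal: "Ksup K (scal c A) = scal c (Ksup K A)"
  by (simp add: Ksup_def mm_simps mult.commute)
lemma blockQ1: "R = Q ** R ** Q \<Longrightarrow> Q ** Q = Q \<Longrightarrow> Q ** R = (R::'n::finite cm)"
proof -
  assume h: "R = Q ** R ** Q" and q: "Q ** Q = Q"
  have "Q ** R = Q ** (Q ** R ** Q)" by (simp only: h[symmetric])
  also have "\<dots> = Q ** R ** Q" by (simp only: matrix_mul_assoc q)
  finally show ?thesis using h by simp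
qed
lemma blockQ2: "R = Q ** R ** Q \<Longrightarrow> Q ** Q = Q \<Longrightarrow> R ** Q = (R::'n::finite cm)"
proof -
  assume h: "R = Q ** R ** Q" and q: "Q ** Q = Q"
  have "R ** Q = (Q ** R ** Q) ** Q" by (simp only: h[symmetric])
  also have "\<dots> = Q ** R ** Q" by (simp only: mm_assoc q)
  finally show ?thesis using h by simp
qed
lemma blockQ3: "Q ** R = R \<Longrightarrow> R ** Q = R \<Longrightarrow> Q ** R ** Q = (R::'n::finite cm)"
  by (simp add: mm_assoc)

lemma Ksup_zero: "Ksup K 0 = 0"
  by (simp add: Ksup_def mm_simps)

context dfs begin

lemma KsQ_inj:
  fixes Y :: "'n cm"
  assumes "Y = Q ** Y ** Q" "Ksup K Y = 0" shows "Y = 0"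
proof -
  have "Y = P ** Y ** P" using ker_Ksup assms(2) by blast
  also have "\<dots> = P ** (Q ** Y ** Q) ** P" using assms(1) by simp
  also have "\<dots> = 0" by (simp add: mm_simps blk)
  finally show ?thesis .
qed

lemma K_inj:
  fixes Z :: "'n cm"
  assumes QZ: "Q ** Z = Z" and KZ: "K ** Z = 0" shows "Z = 0"
proof -
  have a: "Z ** adj Z ** Q = Z ** adj Z"
    using QZ by (metis adjQ adj_mm mm_assoc)
  have b: "Q ** (Z ** adj Z) = Z ** adj Z" using QZ by (simp flip: mm_assoc)
  have c: "Z ** adj Z = Q ** (Z ** adj Z) ** Q" using a b by (simp add: mm_assoc)
  have "K ** (Z ** adj Z) = 0" using KZ by (simp flip: mm_assoc add: mm_lzero)
  moreover have "Z ** adj Z ** adj K = 0" using KZ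
    by (simp add: mm_assoc flip: adj_mm add: adj_zero mm_rzero)
  ultimately have "Ksup K (Z ** adj Z) = 0" by (simp add: Ksup_def scal_zero)
  then have "Z ** adj Z = 0" using KsQ_inj c by blast
  then have "adj (adj Z) ** adj Z = 0" by (simp add: adj_adj)
  then have "adj Z = 0" using trace_adj_self_zero by (metis trace_zero')
  then show ?thesis by (metis adj_adj adj_zero)
qed

lemma decomp: "X = P ** X + Q ** (X::'n cm)"
  by (metis PQsum matrix_mul_lid mm_rdist)
lemma decomp2: "X = X ** P + X ** (Q::'n cm)"
  by (metis PQsum matrix_mul_rid mm_ldist)

lemma Kinv_ex: "\<exists>R::'n cm. R = Q ** R ** Q \<and> R ** K = Q \<and> K ** R = Q"
proof -
  define f :: "'n cm \<Rightarrow> 'n cm" where "f X = K ** (Q ** X) + P ** X" for X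
  have "\<exists>X. f X = Q"
  proof (rule surj_cm)
    show "f (A + B) = f A + f B" for A B by (simp add: f_def mm_simps)
    show "f (scal c A) = scal c (f A)" for c A by (simp add: f_def mm_simps)
    fix Z assume h: "f Z = 0"
    have "P ** f Z = P ** Z" by (simp add: f_def mm_simps blk blkK)
    then have PZ: "P ** Z = 0" using h by (simp add: mm_rzero)
    have "Q ** f Z = K ** (Q ** Z)" by (simp add: f_def mm_simps blk blkK)
    then have "K ** (Q ** Z) = 0" using h by (simp add: mm_rzero)
    then have "Q ** Z = 0" using K_inj[of "Q ** Z"] by (simp add: blk)
    then show "Z = 0" using decomp[of Z] PZ by simp
  qed
  then obtain X where X: "f X = Q" by blast
  have "P ** f X = P ** X" by (simp add: f_def mm_simps blk blkK)
  then have PX: "P ** X = 0" using X by (simp add: blk)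
  then have KQX: "K ** (Q ** X) = Q" using X by (simp add: f_def)
  define R where "R = Q ** X ** Q"
  have "K ** R = (K ** (Q ** X)) ** Q" by (simp add: R_def mm_assoc)
  then have KR: "K ** R = Q" using KQX by (simp add: QQ)
  have QR0: "Q ** R = R" unfolding R_def by (simp add: mm_assoc blk)
  have RQ0: "R ** Q = R" unfolding R_def by (simp add: mm_assoc blk)
  have "K ** (R ** K - Q) = 0" using KR[THEN ri] by (simp add: mm_ldiff blkK)
  moreover have "Q ** (R ** K - Q) = R ** K - Q"
    by (simp add: mm_ldiff QQ QR0[THEN ri])
  ultimately have "R ** K - Q = 0" using K_inj by blast
  then have "R ** K = Q" by simp
  moreover have "R = Q ** R ** Q" using blockQ3[OF QR0 RQ0] by simp
  ultimately show ?thesis using KR by blast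
qed

definition "R = Kinv Q K"

lemma R_props: "R = Q ** R ** Q" "R ** K = Q" "K ** R = Q"
proof -
  have "\<exists>!Y. Y = Q ** Y ** Q \<and> Y ** K = Q \<and> K ** Y = Q"
  proof -
    obtain R0 where R0: "R0 = Q ** R0 ** Q" "R0 ** K = Q" "K ** R0 = Q" using Kinv_ex by blast
    have "Y = R0" if h: "Y = Q ** Y ** Q" "Y ** K = Q" "K ** Y = Q" for Y
    proof -
      have "Y = Y ** Q" using blockQ2[OF h(1) QQ] by simp
      also have "\<dots> = Y ** (K ** R0)" using R0(3) by simp
      also have "\<dots> = (Y ** K) ** R0" by (simp add: mm_assoc)
      also have "\<dots> = R0" using h(2) blockQ1[OF R0(1) QQ] by simp
      finally show ?thesis .
    qed
    then show ?thesis using R0 by blast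
  qed
  then have "R = Q ** R ** Q \<and> R ** K = Q \<and> K ** R = Q"
    unfolding R_def Kinv_def by (rule theI')
  then show "R = Q ** R ** Q" "R ** K = Q" "K ** R = Q" by auto
qed

lemma QR: "Q ** R = R" by (rule blockQ1[OF R_props(1) QQ])
lemma RQ: "R ** Q = R" by (rule blockQ2[OF R_props(1) QQ])
lemma PR: "P ** R = 0" by (metis QR PQ matrix_mul_assoc mm_lzero)
lemma RP: "R ** P = 0" by (metis RQ QP matrix_mul_assoc mm_rzero)
lemma QRa: "Q ** adj R = adj R" by (metis RQ adj_mm adjQ)
lemma RaQ: "adj R ** Q = adj R" by (metis QR adj_mm adjQ)
lemma PRa: "P ** adj R = 0" by (metis RP adj_mm adjP adj_zero)
lemma RaP: "adj R ** P = 0" by (metis PR adj_mm adjP adj_zero)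
lemma RK: "R ** K = Q" by (rule R_props(2))
lemma KR: "K ** R = Q" by (rule R_props(3))
lemma KaRa: "adj K ** adj R = Q" by (metis RK adj_mm adjQ)
lemma RaKa: "adj R ** adj K = Q" by (metis KR adj_mm adjQ)

lemmas blkR = QR RQ PR RP QRa RaQ PRa RaP RK KR KaRa RaKa
  QR[THEN ri] RQ[THEN ri] PR[THEN rz] RP[THEN rz] QRa[THEN ri] RaQ[THEN ri] PRa[THEN rz] RaP[THEN rz]
  RK[THEN ri] KR[THEN ri] KaRa[THEN ri] RaKa[THEN ri]

end


definition Kd :: "'n::finite cm \<Rightarrow> 'n cm \<Rightarrow> 'n cm" where
  "Kd K W = scal \<i> (adj K ** W - W ** K)"

lemma Kd_add: "Kd K (A + B) = Kd K A + Kd K B"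
  by (simp add: Kd_def mm_simps algebra_simps)
lemma Kd_scal: "Kd K (scal c A) = scal c (Kd K A)"
  by (simp add: Kd_def mm_simps mult.commute)

lemma trace_Kd: "trace (adj W ** Ksup K Y) = trace (adj (Kd K W) ** (Y::'n::finite cm))"
proof -
  have "trace (adj W ** (Y ** adj K)) = trace (adj K ** (adj W ** Y))"
    by (subst trace_comm) (simp add: mm_assoc)
  then show ?thesis
    by (simp add: Ksup_def Kd_def mm_simps tr_simps algebra_simps)
qed

context dfs begin

lemma qblock_solve:
  fixes g :: "'n cm \<Rightarrow> 'n cm"
  assumes add: "\<And>A B. g (A + B) = g A + g B" and sc: "\<And>c A. g (scal c A) = scal c (g A)"
  and qq: "\<And>Z. Q ** (g Z ** Q) = g (Q ** (Z ** Q))"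
  and inj: "\<And>Y. Q ** (Y ** Q) = Y \<Longrightarrow> g Y = 0 \<Longrightarrow> Y = 0"
  and X: "Q ** (X ** Q) = X"
  shows "\<exists>!Y. Y = Q ** Y ** Q \<and> g Y = X"
proof -
  have g0: "g 0 = 0" using sc[of 0 0] by (simp add: scal_zero2)
  have gdiff: "g (A - B) = g A - g B" for A B using add[of "A - B" B] by (simp add: algebra_simps)
  define f where "f Y = g (Q ** (Y ** Q)) + (Y - Q ** (Y ** Q))" for Y
  have "\<exists>Y. f Y = X"
  proof (rule surj_cm)
    show "f (A + B) = f A + f B" for A B by (simp add: f_def mm_simps add)
    show "f (scal c A) = scal c (f A)" for c A by (simp add: f_def mm_simps sc)
    fix Y assume h: "f Y = 0"
    have "Q ** (f Y ** Q) = g (Q ** (Y ** Q))"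
      by (simp add: f_def mm_simps blk qq[of "Q ** (Y ** Q)", simplified mm_simps blk])
    then have "g (Q ** (Y ** Q)) = 0" using h by (simp add: mm_simps)
    then have "Q ** (Y ** Q) = 0" using inj[of "Q ** (Y ** Q)"] by (simp add: mm_simps blk)
    then show "Y = 0" using h by (simp add: f_def g0)
  qed
  then obtain Y where Y: "f Y = X" by blast
  have "Q ** (f Y ** Q) = g (Q ** (Y ** Q))"
    by (simp add: f_def mm_simps blk qq[of "Q ** (Y ** Q)", simplified mm_simps blk])
  then have gY: "g (Q ** (Y ** Q)) = X" using Y X by simp
  have ex: "Q ** (Y ** Q) = Q ** (Q ** (Y ** Q)) ** Q \<and> g (Q ** (Y ** Q)) = X"
    using gY by (simp add: mm_simps blk)
  show ?thesis
  proof (rule ex1I[of _ "Q ** (Y ** Q)"])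
    show "Q ** (Y ** Q) = Q ** (Q ** (Y ** Q)) ** Q \<and> g (Q ** (Y ** Q)) = X" by (rule ex)
    fix Z assume Z: "Z = Q ** Z ** Q \<and> g Z = X"
    have "Q ** ((Z - Q ** (Y ** Q)) ** Q) = Z - Q ** (Y ** Q)"
      using blockQ1[OF conjunct1[OF Z] QQ] blockQ2[OF conjunct1[OF Z] QQ]
      by (simp add: mm_simps blk)
    moreover have "g (Z - Q ** (Y ** Q)) = 0" using Z gY by (simp add: gdiff)
    ultimately show "Z = Q ** (Y ** Q)" using inj by fastforce
  qed
qed

lemma Ksup_QQ: "Q ** (Ksup K Z ** Q) = Ksup K (Q ** (Z ** Q))"
  by (simp add: Ksup_def mm_simps blk blkK)

lemma Kd_QQ: "Q ** (Kd K Z ** Q) = Kd K (Q ** (Z ** Q))"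
  by (simp add: Kd_def mm_simps blk blkK)

lemma KsQ_inj': "Q ** (Y ** Q) = Y \<Longrightarrow> Ksup K Y = 0 \<Longrightarrow> Y = 0"
  using KsQ_inj[of Y] by (simp add: mm_assoc)

lemma C_ex1: "Q ** (X ** Q) = X \<Longrightarrow> \<exists>!Y. Y = Q ** Y ** Q \<and> Ksup K Y = X"
  by (rule qblock_solve) (simp_all add: Ksup_add Ksup_scal Ksup_QQ KsQ_inj')

abbreviation "C \<equiv> Ksupinv Q K"

lemma C_props: assumes "Q ** (X ** Q) = X"
  shows "Q ** (C X ** Q) = C X" "Ksup K (C X) = X"
proof -
  have "C X = Q ** C X ** Q \<and> Ksup K (C X) = X"
    unfolding Ksupinv_def by (rule theI'[OF C_ex1[OF assms]])
  then show "Q ** (C X ** Q) = C X" "Ksup K (C X) = X" by (auto simp: mm_assoc)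
qed

lemma C_unique: assumes "Q ** (X ** Q) = X" "Q ** (Y ** Q) = Y" "Ksup K Y = X"
  shows "C X = Y"
  unfolding Ksupinv_def
  by (rule the1_equality[OF C_ex1[OF assms(1)]]) (use assms(2,3) in \<open>simp add: mm_assoc\<close>)

lemma Kd_inj: assumes W: "Q ** (W ** Q) = W" and KW: "Kd K W = 0" shows "W = 0"
proof -
  have "trace (adj W ** W) = trace (adj W ** Ksup K (C W))" using C_props[OF W] by simp
  also have "\<dots> = trace (adj (Kd K W) ** C W)" by (rule trace_Kd)
  also have "\<dots> = 0" using KW by (simp add: adj_zero mm_lzero trace_zero')
  finally show ?thesis by (rule trace_adj_self_zero)
qed

lemma Cd_ex1: "Q ** (X ** Q) = X \<Longrightarrow> \<exists>!Y. Y = Q ** Y ** Q \<and> Kd K Y = X"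
  by (rule qblock_solve) (simp_all add: Kd_add Kd_scal Kd_QQ Kd_inj)

definition "Cd X = (THE Y. Y = Q ** Y ** Q \<and> Kd K Y = X)"

lemma Cd_props: assumes "Q ** (X ** Q) = X"
  shows "Q ** (Cd X ** Q) = Cd X" "Kd K (Cd X) = X"
proof -
  have "Cd X = Q ** Cd X ** Q \<and> Kd K (Cd X) = X"
    unfolding Cd_def by (rule theI'[OF Cd_ex1[OF assms]])
  then show "Q ** (Cd X ** Q) = Cd X" "Kd K (Cd X) = X" by (auto simp: mm_assoc)
qed

lemma Cd_unique: assumes "Q ** (X ** Q) = X" "Q ** (Y ** Q) = Y" "Kd K Y = X"
  shows "Cd X = Y"
  unfolding Cd_def
  by (rule the1_equality[OF Cd_ex1[OF assms(1)]]) (use assms(2,3) in \<open>simp add: mm_assoc\<close>)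

end


lemma funpow_comm:
  fixes L Y :: "'a \<Rightarrow> 'a"
  assumes "L \<circ> Y = Y \<circ> L" shows "(L ^^ n) \<circ> Y = Y \<circ> (L ^^ n)"
proof (induction n)
  case 0 then show ?case by simp
next
  case (Suc n)
  have "(L ^^ Suc n) \<circ> Y = L \<circ> ((L ^^ n) \<circ> Y)" by (simp only: funpow.simps(2) o_assoc)
  also have "\<dots> = (L \<circ> Y) \<circ> (L ^^ n)" by (simp only: Suc.IH o_assoc)
  also have "\<dots> = Y \<circ> (L ^^ Suc n)" by (simp only: assms funpow.simps(2) o_assoc)
  finally show ?case .
qed

lemma drazin_pow1:
  fixes L Y :: "'a \<Rightarrow> 'a"
  assumes a: "Y \<circ> L \<circ> Y = Y" and c: "L \<circ> Y = Y \<circ> L"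
  shows "Y = (Y ^^ Suc n) \<circ> (L ^^ n)"
proof (induction n)
  case 0 then show ?case by simp
next
  case (Suc n)
  have "Y \<circ> Y \<circ> L = Y \<circ> (L \<circ> Y)" by (simp only: c o_assoc)
  then have yyl: "Y \<circ> Y \<circ> L = Y" using a by (simp only: o_assoc)
  have e1: "Y ^^ Suc (Suc n) = Y ^^ n \<circ> Y \<circ> Y" by (simp only: funpow_Suc_right o_assoc)
  have e2: "L ^^ Suc n = L \<circ> L ^^ n" by simp
  have e3: "Y ^^ Suc n = Y ^^ n \<circ> Y" by (simp only: funpow_Suc_right)
  have "(Y ^^ Suc (Suc n)) \<circ> (L ^^ Suc n) = (Y ^^ n) \<circ> (Y \<circ> Y \<circ> L) \<circ> (L ^^ n)"
    by (simp only: e1 e2 o_assoc)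
  also have "\<dots> = (Y ^^ Suc n) \<circ> (L ^^ n)"
    by (simp only: yyl e3)
  finally have cc: "(Y ^^ Suc (Suc n)) \<circ> (L ^^ Suc n) = (Y ^^ Suc n) \<circ> (L ^^ n)" .
  show ?case by (rule trans[OF Suc.IH cc[symmetric]])
qed

lemma drazin_pow2:
  fixes L Y :: "'a \<Rightarrow> 'a"
  assumes a: "Y \<circ> L \<circ> Y = Y" and c: "L \<circ> Y = Y \<circ> L"
  shows "Y = (L ^^ n) \<circ> (Y ^^ Suc n)"
proof (induction n)
  case 0 then show ?case by simp
next
  case (Suc n)
  have "L \<circ> Y \<circ> Y = Y \<circ> L \<circ> Y" by (simp only: c o_assoc)
  then have lyy: "L \<circ> Y \<circ> Y = Y" using a by (simp only: o_assoc)
  have e1: "Y ^^ Suc (Suc n) = Y \<circ> Y \<circ> Y ^^ n" by (simp add: o_assoc)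
  have e2: "L ^^ Suc n = L ^^ n \<circ> L" by (simp only: funpow_Suc_right)
  have e3: "Y ^^ Suc n = Y \<circ> Y ^^ n" by simp
  have "(L ^^ Suc n) \<circ> (Y ^^ Suc (Suc n)) = (L ^^ n) \<circ> (L \<circ> Y \<circ> Y) \<circ> (Y ^^ n)"
    by (simp only: e1 e2 o_assoc)
  also have "\<dots> = (L ^^ n) \<circ> (Y ^^ Suc n)"
    by (simp only: lyy e3 o_assoc)
  finally have cc: "(L ^^ Suc n) \<circ> (Y ^^ Suc (Suc n)) = (L ^^ n) \<circ> (Y ^^ Suc n)" .
  show ?case by (rule trans[OF Suc.IH cc[symmetric]])
qed

lemma drazin_uniq:
  fixes L X Y :: "'a \<Rightarrow> 'a"
  assumes x1: "X \<circ> L \<circ> X = X" and x2: "L \<circ> X = X \<circ> L" and x3: "(L ^^ Suc k) \<circ> X = L ^^ k"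
      and y1: "Y \<circ> L \<circ> Y = Y" and y2: "L \<circ> Y = Y \<circ> L" and y3: "(L ^^ Suc j) \<circ> Y = L ^^ j"
  shows "X = Y"
proof -
  have "Y = (Y ^^ Suc k) \<circ> (L ^^ k)" by (rule drazin_pow1[OF y1 y2])
  also have "\<dots> = (Y ^^ Suc k) \<circ> ((L ^^ Suc k) \<circ> X)" by (simp only: x3)
  also have "\<dots> = ((Y ^^ Suc k) \<circ> (L ^^ Suc k)) \<circ> X" by (simp only: o_assoc)
  also have "(Y ^^ Suc k) \<circ> (L ^^ Suc k) = ((Y ^^ Suc k) \<circ> (L ^^ k)) \<circ> L"
    by (simp only: funpow_Suc_right[of k L] o_assoc)
  also have "(Y ^^ Suc k) \<circ> (L ^^ k) = Y" using drazin_pow1[OF y1 y2, of k] by (rule sym)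
  finally have Y: "Y = Y \<circ> L \<circ> X" .
  have e1: "L ^^ j = Y \<circ> (L ^^ Suc j)" by (rule trans[OF y3[symmetric] funpow_comm[OF y2]])
  have "X = (L ^^ j) \<circ> (X ^^ Suc j)" by (rule drazin_pow2[OF x1 x2])
  also have "\<dots> = Y \<circ> (L ^^ Suc j) \<circ> (X ^^ Suc j)" by (simp only: e1)
  also have "\<dots> = Y \<circ> L \<circ> ((L ^^ j) \<circ> (X ^^ Suc j))"
    by (simp only: funpow.simps(2) o_assoc)
  also have "(L ^^ j) \<circ> (X ^^ Suc j) = X" using drazin_pow2[OF x1 x2, of j] by (rule sym)
  finally have "X = Y \<circ> L \<circ> X" .
  then show ?thesis using Y by (rule trans[OF _ sym])
qed

lemma drazin_eqI:
  assumes "superop_linear D" "D \<circ> L \<circ> D = D" "L \<circ> D = D \<circ> L" "(L ^^ Suc k) \<circ> D = L ^^ k"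
  shows "drazin L = D"
  unfolding drazin_def
proof (rule the_equality)
  show "superop_linear D \<and> D \<circ> L \<circ> D = D \<and> L \<circ> D = D \<circ> L \<and> (\<exists>k. (L ^^ Suc k) \<circ> D = L ^^ k)"
    by (rule conjI[OF assms(1) conjI[OF assms(2) conjI[OF assms(3) exI[of "\<lambda>k. (L ^^ Suc k) \<circ> D = L ^^ k", OF assms(4)]]]])
  fix X assume "superop_linear X \<and> X \<circ> L \<circ> X = X \<and> L \<circ> X = X \<circ> L \<and> (\<exists>k. (L ^^ Suc k) \<circ> X = L ^^ k)"
  then obtain j where "X \<circ> L \<circ> X = X" "L \<circ> X = X \<circ> L" "(L ^^ Suc j) \<circ> X = L ^^ j" by blast
  then show "X = D" by (rule drazin_uniq[OF _ _ _ assms(2-4)])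
qed


lemma Ksup_sum: "Ksup K (\<Sum>i\<in>I. f i) = (\<Sum>i\<in>I. Ksup K (f i))"
  by (induction I rule: infinite_finite_induct) (auto simp: Ksup_zero Ksup_add)
lemma Ksup_neg: "Ksup K (- A) = - Ksup K A"
  by (simp add: Ksup_def mm_simps)
lemma S_add: "Ssup F m (A + B) = Ssup F m A + Ssup F m B"
  by (simp add: Ssup_def mm_simps sum.distrib)
lemma S_diff: "Ssup F m (A - B) = Ssup F m A - Ssup F m B"
  by (simp add: Ssup_def mm_simps sum_subtractf)
lemma S_scal: "Ssup F m (scal c A) = scal c (Ssup F m A)"
  by (simp add: Ssup_def mm_simps)
lemma S_zero: "Ssup F m 0 = 0"
  by (simp add: Ssup_def mm_simps)
lemma S_sum: "Ssup F m (\<Sum>i\<in>I. f i) = (\<Sum>i\<in>I. Ssup F m (f i))"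
  by (simp add: Ssup_def mm_simps) (rule sum.swap)

context dfs begin

abbreviation "LL \<equiv> lindblad H F m"

lemma LL_split: "LL X = Ksup K X + S X" by (rule L_split)
lemma LL_add: "LL (A + B) = LL A + LL B"
  by (simp add: L_split Ksup_add S_add)
lemma LL_diff: "LL (A - B) = LL A - LL B"
  by (simp add: L_split Ksup_diff S_diff)
lemma LL_scal: "LL (scal c A) = scal c (LL A)"
  by (simp add: L_split Ksup_scal S_scal scal_add)
lemma LL_ul: "LL (P ** (X ** P)) = 0"
  using DFS[of "P ** (X ** P)"] by (simp add: mm_simps blk)
lemma PSP: "P ** (S X ** P) = S X"
  by (simp add: Ssup_def mm_simps blk)
lemma S_QQ: "S (Q ** (X ** Q)) = S X"
  by (simp add: Ssup_def mm_simps blk)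
lemma LL_S: "LL (S X) = 0"
  using LL_ul[of "S X"] by (simp add: PSP)

lemma decomp4: "X = P ** (X ** P) + P ** (X ** Q) + Q ** (X ** P) + Q ** (X ** (Q::'n cm))"
proof -
  have "X = (P + Q) ** X ** (P + Q)" by (simp add: PQsum)
  then show ?thesis by (simp add: mm_simps algebra_simps)
qed

lemma qb_C: "Q ** (C (Q ** (X ** Q)) ** Q) = C (Q ** (X ** Q))"
  by (rule C_props(1)) (simp add: mm_simps blk)
lemma Ks_C: "Ksup K (C (Q ** (X ** Q))) = Q ** (X ** Q)"
  by (rule C_props(2)) (simp add: mm_simps blk)
lemma QC: "Q ** C (Q ** (X ** Q)) = C (Q ** (X ** Q))"
  by (metis qb_C QQ mm_assoc)
lemma CQ: "C (Q ** (X ** Q)) ** Q = C (Q ** (X ** Q))"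
  by (metis qb_C QQ mm_assoc)
lemma PC: "P ** C (Q ** (X ** Q)) = 0"
  by (metis QC PQ mm_assoc mm_lzero)
lemma CP: "C (Q ** (X ** Q)) ** P = 0"
  by (metis CQ QP mm_assoc mm_rzero)
lemmas blkC = QC CQ PC CP QC[THEN ri] CQ[THEN ri] PC[THEN rz] CP[THEN rz]

lemma C_zero: "C 0 = 0"
  by (rule C_unique) (simp_all add: mm_simps Ksup_zero)

lemma C_add: assumes "Q ** (A ** Q) = A" "Q ** (B ** Q) = B"
  shows "C (A + B) = C A + C B"
proof (rule C_unique)
  show "Q ** ((A + B) ** Q) = A + B" using assms by (simp add: mm_simps)
  have a: "Q ** (C A ** Q) = C A" "Ksup K (C A) = A" using C_props[OF assms(1)] by auto
  have b: "Q ** (C B ** Q) = C B" "Ksup K (C B) = B" using C_props[OF assms(2)] by auto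
  show "Q ** ((C A + C B) ** Q) = C A + C B" using a b by (simp add: mm_simps)
  show "Ksup K (C A + C B) = A + B" using a b by (simp add: Ksup_add)
qed

lemma C_scal: assumes "Q ** (A ** Q) = A"
  shows "C (scal c A) = scal c (C A)"
proof (rule C_unique)
  show "Q ** (scal c A ** Q) = scal c A" using assms by (simp add: mm_simps)
  have a: "Q ** (C A ** Q) = C A" "Ksup K (C A) = A" using C_props[OF assms(1)] by auto
  show "Q ** (scal c (C A) ** Q) = scal c (C A)" using a by (simp add: mm_simps)
  show "Ksup K (scal c (C A)) = scal c A" using a by (simp add: Ksup_scal)
qed

lemma C_sum: assumes "\<And>i. i \<in> I \<Longrightarrow> Q ** (f i ** Q) = f i"
  shows "C (\<Sum>i\<in>I. f i) = (\<Sum>i\<in>I. C (f i))"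
proof (cases "finite I")
  case True
  then show ?thesis using assms
  proof (induction I rule: finite_induct)
    case empty then show ?case by (simp add: C_zero)
  next
    case (insert x F)
    have bs: "Q ** ((\<Sum>i\<in>F. f i) ** Q) = (\<Sum>i\<in>F. f i)"
      using insert.prems by (simp add: mm_simps)
    show ?case using insert by (simp add: C_add[OF _ bs])
  qed
next
  case False then show ?thesis by (simp add: C_zero)
qed

definition "G X = scal (-\<i>) (P ** (X ** (Q ** adj R))) + scal \<i> (R ** (Q ** (X ** P))) + C (Q ** (X ** Q))"
definition "D X = G X + S (G (G X))"

lemma G_add: "G (A + B) = G A + G B"
  by (simp add: G_def mm_simps C_add[of "Q ** (A ** Q)" "Q ** (B ** Q)", simplified mm_simps blk] algebra_simps)
lemma G_scal: "G (scal c A) = scal c (G A)"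
  by (simp add: G_def mm_simps C_scal[of "Q ** (A ** Q)", simplified mm_simps blk] scal_add mult.commute)
lemma G_zero: "G 0 = 0"
  using G_scal[of 0 0] by (simp add: scal_zero2)
lemma G_neg: "G (- A) = - G A"
  using G_scal[of "-1" A] by (simp add: scal_minus_c scal_one)
lemma G_diff: "G (A - B) = G A - G B"
  using G_add[of A "- B"] G_neg[of B] by simp

lemma QGQ: "Q ** (G X ** Q) = C (Q ** (X ** Q))"
  by (simp add: G_def mm_simps blk blkR blkC)
lemma G_ul: "G (P ** (X ** P)) = 0"
  by (simp add: G_def mm_simps blk blkR C_zero)
lemma G_S: "G (S X) = 0"
  using G_ul[of "S X"] by (simp add: PSP)

lemma Ksup_G: "Ksup K (G X) = X - P ** (X ** P)"
proof -
  have "Ksup K (G X) = P ** (X ** Q) + Q ** (X ** P) + Q ** (X ** Q)"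
    by (simp add: G_def Ksup_add Ksup_scal Ks_C) (simp add: Ksup_def mm_simps blk blkK blkR)
  then show ?thesis using decomp4[of X] by (simp add: algebra_simps)
qed

lemma G_Ksup: "G (Ksup K Y) = Y - P ** (Y ** P)"
proof -
  have c: "C (Q ** (Ksup K Y ** Q)) = Q ** (Y ** Q)"
    by (rule C_unique) (simp_all add: Ksup_QQ mm_simps blk)
  have "G (Ksup K Y) = P ** (Y ** Q) + Q ** (Y ** P) + Q ** (Y ** Q)"
    by (simp only: G_def c) (simp add: Ksup_def mm_simps blk blkK blkR)
  then show ?thesis using decomp4[of Y] by (simp add: algebra_simps)
qed

lemma LL_D: "LL (D X) = X - P ** (X ** P) + S (G X)"
proof -
  have a: "LL (G X) = X - P ** (X ** P) + S (G X)" by (simp add: LL_split Ksup_G)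
  show ?thesis by (simp only: D_def LL_add LL_S a) simp
qed

lemma D_ul: "D (P ** (X ** P)) = 0"
  by (simp add: D_def G_ul G_zero S_zero)
lemma D_S: "D (S X) = 0"
  by (simp add: D_def G_S G_zero S_zero)
lemma D_add: "D (A + B) = D A + D B"
  by (simp add: D_def G_add S_add)
lemma D_diff: "D (A - B) = D A - D B"
  by (simp add: D_def G_diff S_diff)
lemma D_scal: "D (scal c A) = scal c (D A)"
  by (simp add: D_def G_scal S_scal scal_add)

lemma D_LL: "D (LL X) = X - P ** (X ** P) + S (G X)"
proof -
  have g: "G (LL X) = X - P ** (X ** P)" by (simp add: LL_split G_add G_S G_Ksup)
  show ?thesis by (simp add: D_def g G_diff G_ul)
qed

lemma drazin_LL: "drazin LL = D"
proof (rule drazin_eqI[where k=1])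
  show "superop_linear D" unfolding superop_linear_def by (simp add: D_add D_scal)
  show "D \<circ> LL \<circ> D = D"
    by (rule ext) (simp add: LL_D D_add D_diff D_ul D_S)
  show "LL \<circ> D = D \<circ> LL"
    by (rule ext) (simp add: LL_D D_LL)
  show "(LL ^^ Suc 1) \<circ> D = LL ^^ 1"
    by (rule ext) (simp add: LL_D LL_add LL_diff LL_ul LL_S)
qed

lemma Pinf_LL: "Pinf LL X = P ** (X ** P) - S (C (Q ** (X ** Q)))"
proof -
  have "S (G X) = S (C (Q ** (X ** Q)))" by (metis S_QQ QGQ)
  then show ?thesis by (simp add: Pinf_def drazin_LL LL_D)
qed

end


lemma scal_half: "scal (1/2) A + scal (1/2) A = (A::'n::finite cm)"
  "scal (1/2) A + (scal (1/2) A + B) = A + (B::'n::finite cm)"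
  by (simp_all add: scal_def vec_eq_iff)

lemma hs_adjoint_eqI:
  fixes E G :: "'n::finite cm \<Rightarrow> 'n cm"
  assumes "\<And>A B. trace (adj A ** E B) = trace (adj (G A) ** B)"
  shows "hs_adjoint E = G"
  unfolding hs_adjoint_def
proof (rule the_equality)
  show "\<forall>A B. trace (adj A ** E B) = trace (adj (G A) ** B)" using assms by blast
  fix G' assume h: "\<forall>A B. trace (adj A ** E B) = trace (adj (G' A) ** B)"
  show "G' = G"
  proof
    fix A
    define B where "B = G' A - G A"
    have "trace (adj B ** B) = trace (adj (G' A) ** B) - trace (adj (G A) ** B)"
      by (simp add: B_def adj_diff mm_rdiff trace_diff')
    also have "\<dots> = 0" using h assms by simp
    finally show "G' A = G A" using trace_adj_self_zero unfolding B_def by fastforce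
  qed
qed

context dfs begin

lemma Cd_zero: "Cd 0 = 0"
  by (rule Cd_unique) (simp_all add: mm_simps Kd_def)

lemma Cd_add: assumes "Q ** (A ** Q) = A" "Q ** (B ** Q) = B"
  shows "Cd (A + B) = Cd A + Cd B"
proof (rule Cd_unique)
  show "Q ** ((A + B) ** Q) = A + B" using assms by (simp add: mm_simps)
  have a: "Q ** (Cd A ** Q) = Cd A" "Kd K (Cd A) = A" using Cd_props[OF assms(1)] by auto
  have b: "Q ** (Cd B ** Q) = Cd B" "Kd K (Cd B) = B" using Cd_props[OF assms(2)] by auto
  show "Q ** ((Cd A + Cd B) ** Q) = Cd A + Cd B" using a b by (simp add: mm_simps)
  show "Kd K (Cd A + Cd B) = A + B" using a b by (simp add: Kd_add)
qed

lemma Cd_sum: assumes "\<And>i. i \<in> I \<Longrightarrow> Q ** (f i ** Q) = f i"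
  shows "Cd (\<Sum>i\<in>I. f i) = (\<Sum>i\<in>I. Cd (f i))"
proof (cases "finite I")
  case True
  then show ?thesis using assms
  proof (induction I rule: finite_induct)
    case empty then show ?case by (simp add: Cd_zero)
  next
    case (insert x F)
    have bs: "Q ** ((\<Sum>i\<in>F. f i) ** Q) = (\<Sum>i\<in>F. f i)"
      using insert.prems by (simp add: mm_simps)
    show ?case using insert by (simp add: Cd_add[OF _ bs])
  qed
next
  case False then show ?thesis by (simp add: Cd_zero)
qed

lemma Cd_T: "Cd T = - Q"
proof (rule Cd_unique)
  show "Q ** (T ** Q) = T" by (simp add: blkK)
  show "Q ** (- Q ** Q) = - Q" by (simp add: mm_simps blk)
  have e: "K - adj K = - scal \<i> T" by (simp only: adjK) (simp add: K_def' scal_def vec_eq_iff)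
  have "Kd K (- Q) = scal \<i> (K - adj K)" by (simp add: Kd_def mm_simps blkK)
  then show "Kd K (- Q) = T" using e by (simp add: mm_simps)
qed

lemma tr_term:
  assumes QX: "Q ** X = X" and that: "Q ** (adj Fp ** (A ** Fp) ** Q) = adj Fp ** (A ** Fp)"
  shows "trace (adj A ** (Fp ** (C (X ** (B ** adj X)) ** adj Fp))) =
         trace (adj (adj X ** (Cd (adj Fp ** (A ** Fp)) ** X)) ** B)"
proof -
  define M where "M = X ** (B ** adj X)"
  define Z where "Z = adj Fp ** (A ** Fp)"
  have XaQ: "adj X ** Q = adj X" using QX by (metis adjQ adj_mm)
  have Mb: "Q ** (M ** Q) = M" unfolding M_def by (simp add: mm_assoc QX[THEN ri] XaQ)
  have Zb: "Q ** (Z ** Q) = Z" unfolding Z_def using that by (simp add: mm_assoc)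
  have "trace (adj A ** (Fp ** (C M ** adj Fp))) = trace (adj Fp ** (adj A ** (Fp ** C M)))"
    by (subst trace_comm) (simp add: mm_assoc)
  also have "\<dots> = trace (adj Z ** C M)" by (simp add: Z_def mm_simps)
  also have "\<dots> = trace (adj (Kd K (Cd Z)) ** C M)" using Cd_props(2)[OF Zb] by simp
  also have "\<dots> = trace (adj (Cd Z) ** Ksup K (C M))" by (rule trace_Kd[symmetric])
  also have "\<dots> = trace (adj (Cd Z) ** M)" using C_props(2)[OF Mb] by simp
  also have "\<dots> = trace (adj X ** (adj (Cd Z) ** (X ** B)))"
    unfolding M_def by (subst trace_comm) (simp add: mm_assoc)
  also have "\<dots> = trace (adj (adj X ** (Cd Z ** X)) ** B)" by (simp add: mm_simps)
  finally show ?thesis by (simp add: M_def Z_def mm_assoc)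
qed

definition "Eeff f = (\<lambda>\<sigma>. - (\<Sum>l<m. \<Sum>l'<m.
    F l' ** Ksupinv Q K ((Q ** f l ** P) ** \<sigma> ** adj (Q ** f l ** P)) ** adj (F l')))"

lemma hs_Eeff: "hs_adjoint (Eeff f) (mat 1) = (\<Sum>l<m. adj (Q ** f l ** P) ** (Q ** f l ** P))"
proof -
  define fl where "fl l = Q ** f l ** P" for l
  have Qfl: "Q ** fl l = fl l" for l unfolding fl_def by (simp add: mm_assoc blk)
  define G' where "G' A = - (\<Sum>l<m. \<Sum>l'<m. adj (fl l) ** (Cd (adj (F l') ** (A ** F l')) ** fl l))" for A
  have "hs_adjoint (Eeff f) = G'"
  proof (rule hs_adjoint_eqI)
    fix A B
    have "trace (adj A ** Eeff f B) =
      - (\<Sum>l<m. \<Sum>l'<m. trace (adj A ** (F l' ** (C (fl l ** (B ** adj (fl l))) ** adj (F l')))))"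
      unfolding Eeff_def fl_def by (simp add: mm_simps tr_simps)
    also have "\<dots> = - (\<Sum>l<m. \<Sum>l'<m. trace (adj (adj (fl l) ** (Cd (adj (F l') ** (A ** F l')) ** fl l)) ** B))"
      by (intro arg_cong[where f=uminus] sum.cong refl tr_term Qfl) (simp add: mm_simps blk)
    also have "\<dots> = trace (adj (G' A) ** B)"
      unfolding G'_def by (simp add: mm_simps tr_simps)
    finally show "trace (adj A ** Eeff f B) = trace (adj (G' A) ** B)" .
  qed
  then have "hs_adjoint (Eeff f) (mat 1) = G' (mat 1)" by simp
  also have "\<dots> = - (\<Sum>l<m. adj (fl l) ** (Cd (\<Sum>l'<m. adj (F l') ** F l') ** fl l))"
    unfolding G'_def
    by (subst Cd_sum) (simp_all add: mm_simps blk)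
  also have "\<dots> = (\<Sum>l<m. adj (fl l) ** fl l)"
    using Cd_T by (simp add: T_def[symmetric] mm_simps Qfl[THEN ri] Qfl sum_negf)
  finally show ?thesis by (simp add: fl_def)
qed

end


context dfs begin

lemma zr1: fixes X Y :: "'n cm" assumes "X ** Q = X" "P ** Y = Y" shows "X ** Y = 0"
proof -
  have "X ** Y = (X ** Q) ** (P ** Y)" using assms by simp
  also have "\<dots> = X ** (Q ** (P ** Y))" by (simp only: mm_assoc)
  also have "\<dots> = 0" by (simp add: QP[THEN rz] mm_rzero)
  finally show ?thesis .
qed
lemma zr3: fixes X Y :: "'n cm" assumes "X ** P = X" "Q ** Y = Y" shows "X ** Y = 0"
proof -
  have "X ** Y = (X ** P) ** (Q ** Y)" using assms by simp
  also have "\<dots> = X ** (P ** (Q ** Y))" by (simp only: mm_assoc)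
  also have "\<dots> = 0" by (simp add: PQ[THEN rz] mm_rzero)
  finally show ?thesis .
qed

lemma core2:
  fixes a b c d \<rho> :: "'n cm"
  assumes a: "P ** a = a" "a ** Q = a" and b: "P ** b = b" "b ** Q = b"
    and c: "Q ** c = c" "c ** P = c" and d: "Q ** d = d" "d ** P = d"
    and r: "P ** \<rho> = \<rho>" "\<rho> ** P = \<rho>"
    and RTR: "\<And>X. adj R ** (T ** (R ** X)) = scal \<i> (adj R ** X) - scal \<i> (R ** X)"
  shows "scal (\<i>/2) ((b+c) ** R ** (b+c) ** \<rho> + (a+d) ** adj R ** (a+d) ** \<rho>
             - \<rho> ** (b+c) ** R ** (b+c) - \<rho> ** (a+d) ** adj R ** (a+d))
     - scal \<i> (scal (1/2) (a+b) ** R ** (b+c) ** \<rho>)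
     + scal \<i> (\<rho> ** (a+d) ** adj R ** scal (1/2) (c+d))
     + scal (1/2) (\<rho> ** scal (-\<i>) (a-b) ** R ** (b+c) + (a+d) ** adj R ** scal (-\<i>) (d-c) ** \<rho>)
     - scal (1/2) ((a+d) ** adj R ** T ** R ** (b+c) ** \<rho> + \<rho> ** (a+d) ** adj R ** T ** R ** (b+c)) = 0"
proof -
  note bf = a b c d r blkR TQ QT
  have zs: "a ** a = 0" "a ** b = 0" "a ** \<rho> = 0" "b ** a = 0" "b ** b = 0" "b ** \<rho> = 0" "c ** c = 0" "c ** d = 0" "c ** R = 0" "c ** (adj R) = 0" "c ** T = 0" "d ** c = 0" "d ** d = 0" "d ** R = 0" "d ** (adj R) = 0" "d ** T = 0" "\<rho> ** c = 0" "\<rho> ** d = 0" "\<rho> ** R = 0" "\<rho> ** (adj R) = 0" "\<rho> ** T = 0" "R ** a = 0" "R ** b = 0" "R ** \<rho> = 0" "(adj R) ** a = 0" "(adj R) ** b = 0" "(adj R) ** \<rho> = 0" "T ** a = 0" "T ** b = 0" "T ** \<rho> = 0"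
    by (rule zr1[OF a(2) a(1)] zr1[OF a(2) b(1)] zr1[OF a(2) r(1)] zr1[OF b(2) a(1)] zr1[OF b(2) b(1)] zr1[OF b(2) r(1)] zr3[OF c(2) c(1)] zr3[OF c(2) d(1)] zr3[OF c(2) QR] zr3[OF c(2) QRa] zr3[OF c(2) QT] zr3[OF d(2) c(1)] zr3[OF d(2) d(1)] zr3[OF d(2) QR] zr3[OF d(2) QRa] zr3[OF d(2) QT] zr3[OF r(2) c(1)] zr3[OF r(2) d(1)] zr3[OF r(2) QR] zr3[OF r(2) QRa] zr3[OF r(2) QT] zr1[OF RQ a(1)] zr1[OF RQ b(1)] zr1[OF RQ r(1)] zr1[OF RaQ a(1)] zr1[OF RaQ b(1)] zr1[OF RaQ r(1)] zr1[OF TQ a(1)] zr1[OF TQ b(1)] zr1[OF TQ r(1)])+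
  show ?thesis
    apply (simp add: mm_simps bf zs zs[THEN rz] RTR)
    done
qed

end


context dfs begin

lemma D_of: assumes "Q ** (Y ** Q) = 0"
  shows "D Y = scal (-\<i>) (P ** (Y ** (Q ** adj R))) + scal \<i> (R ** (Q ** (Y ** P)))"
proof -
  have g: "G Y = scal (-\<i>) (P ** (Y ** (Q ** adj R))) + scal \<i> (R ** (Q ** (Y ** P)))"
    unfolding G_def using assms by (simp add: C_zero)
  have "Q ** (G Y ** Q) = 0" using QGQ[of Y] assms by (simp add: C_zero)
  then have "Q ** (G (G Y) ** Q) = 0" using QGQ[of "G Y"] by (simp add: C_zero)
  then have "S (G (G Y)) = 0" using S_QQ[of "G (G Y)"] by (simp add: S_zero)
  then show ?thesis by (simp add: D_def g)
qed

lemma RTR: "adj R ** (T ** (R ** X)) = scal \<i> (adj R ** X) - scal \<i> (R ** X)"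
proof -
  have e: "K - adj K = - scal \<i> T" by (simp only: adjK) (simp add: K_def' scal_def vec_eq_iff)
  have T: "T = scal \<i> (K - adj K)" using e by (simp add: mm_simps)
  show ?thesis by (subst T) (simp add: mm_simps blkR blk)
qed

end

locale dfs2 = dfs P Q H F m for P Q H :: "'n::finite cm" and F m +
  fixes V :: "'n cm" and f :: "nat \<Rightarrow> 'n cm" and \<rho> :: "'n cm"
  assumes hV: "adj V = V" and h\<rho>: "\<rho> = P ** \<rho> ** P"
begin

lemma Pr: "P ** \<rho> = \<rho>" by (rule blockQ1[OF h\<rho> PP])
lemma rP: "\<rho> ** P = \<rho>" by (rule blockQ2[OF h\<rho> PP])

lemmas rzl = zr1[OF QQ Pr] zr1[OF RQ Pr] zr1[OF RaQ Pr] zr1[OF FQ Pr] zr1[OF TQ Pr] zr1[OF HQ' Pr]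
  zr1[OF KQ Pr] zr1[OF KaQ Pr]
lemmas rzr = zr3[OF rP QQ] zr3[OF rP QR] zr3[OF rP QRa] zr3[OF rP QFa] zr3[OF rP QT] zr3[OF rP QH]
  zr3[OF rP QK] zr3[OF rP QKa]
lemmas blkr = Pr rP Pr[THEN ri] rP[THEN ri] rzl rzr rzl[THEN rz] rzr[THEN rz]

definition "W1 = (\<Sum>l<m. adj (P ** (f l ** P)) ** F l)"
definition "KE = Keff P V F f m"

lemma KE_eq: "KE = P ** (V ** Q) + Q ** (V ** P) - scal (\<i>/2) (adj W1 + W1)"
  unfolding KE_def Keff_def Let_def W1_def Qdef[symmetric]
  by (simp add: mm_simps sum.distrib)

lemma PW: "P ** W1 = W1" by (simp add: W1_def mm_simps blk)
lemma WQ: "W1 ** Q = W1" by (simp add: W1_def mm_simps blk)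
lemma QWa: "Q ** adj W1 = adj W1" by (metis WQ adj_mm adjQ)
lemma WaP: "adj W1 ** P = adj W1" by (metis PW adj_mm adjP)

definition "A = R ** KE ** \<rho>"
definition "B = \<rho> ** adj KE ** adj R"
definition "Z = R ** KE ** \<rho> ** adj KE ** adj R"

definition "CoreExpr = scal (\<i>/2) (KE ** R ** KE ** \<rho> + adj KE ** adj R ** adj KE ** \<rho>
             - \<rho> ** KE ** R ** KE - \<rho> ** adj KE ** adj R ** adj KE)
     - scal \<i> (P ** V ** Q ** R ** KE ** \<rho>)
     + scal \<i> (\<rho> ** adj KE ** adj R ** (Q ** V ** P))
     + scal (1/2) (\<rho> ** W1 ** R ** KE + adj KE ** adj R ** adj W1 ** \<rho>)
     - scal (1/2) (adj KE ** adj R ** T ** R ** KE ** \<rho> + \<rho> ** adj KE ** adj R ** T ** R ** KE)"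

lemma CoreExpr_zero: "CoreExpr = 0"
proof -
  define a where "a = P ** (V ** Q) + scal (\<i>/2) W1"
  define b where "b = P ** (V ** Q) - scal (\<i>/2) W1"
  define c where "c = Q ** (V ** P) - scal (\<i>/2) (adj W1)"
  define d where "d = Q ** (V ** P) + scal (\<i>/2) (adj W1)"
  have ab: "P ** a = a" "a ** Q = a" "P ** b = b" "b ** Q = b"
    by (simp_all add: a_def b_def mm_simps blk PW WQ PW[THEN ri])
  have cd: "Q ** c = c" "c ** P = c" "Q ** d = d" "d ** P = d"
    by (simp_all add: c_def d_def mm_simps blk QWa WaP QWa[THEN ri])
  have e1: "KE = b + c" by (simp add: KE_eq b_def c_def scal_def vec_eq_iff algebra_simps)
  have "adj KE = P ** (V ** Q) + Q ** (V ** P) + scal (\<i>/2) (adj W1 + W1)"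
    by (simp add: KE_eq mm_simps hV blk)
  then have e2: "adj KE = a + d" by (simp add: a_def d_def scal_def vec_eq_iff algebra_simps)
  have e3: "P ** V ** Q = scal (1/2) (a + b)" by (simp add: a_def b_def scal_def vec_eq_iff mm_assoc)
  have e4: "Q ** V ** P = scal (1/2) (c + d)" by (simp add: c_def d_def scal_def vec_eq_iff mm_assoc)
  have e5: "W1 = scal (-\<i>) (a - b)" by (simp add: a_def b_def scal_def vec_eq_iff algebra_simps)
  have e6: "adj W1 = scal (-\<i>) (d - c)" by (simp add: c_def d_def scal_def vec_eq_iff algebra_simps)
  have "CoreExpr = scal (\<i>/2) ((b+c) ** R ** (b+c) ** \<rho> + (a+d) ** adj R ** (a+d) ** \<rho>
             - \<rho> ** (b+c) ** R ** (b+c) - \<rho> ** (a+d) ** adj R ** (a+d))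
     - scal \<i> (scal (1/2) (a+b) ** R ** (b+c) ** \<rho>)
     + scal \<i> (\<rho> ** (a+d) ** adj R ** scal (1/2) (c+d))
     + scal (1/2) (\<rho> ** scal (-\<i>) (a-b) ** R ** (b+c) + (a+d) ** adj R ** scal (-\<i>) (d-c) ** \<rho>)
     - scal (1/2) ((a+d) ** adj R ** T ** R ** (b+c) ** \<rho> + \<rho> ** (a+d) ** adj R ** T ** R ** (b+c))"
    unfolding CoreExpr_def by (simp only: e2 e6) (simp only: e1 e3 e4 e5)
  also have "\<dots> = 0"
    by (rule core2[OF ab(1,2) ab(3,4) cd(1,2) cd(3,4) Pr rP RTR])
  finally show ?thesis .
qed

end


lemmas sum_simps = sum.distrib sum_subtractf sum_negf

context dfs2 begin

lemma LLr: "LL \<rho> = 0" using DFS h\<rho> by blast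

lemma QO1Q: "Q ** (O1 V F f m \<rho> ** Q) = 0"
  by (simp add: O1_def comm_def acomm_def mm_simps blk blkr)

lemma DO1: "D (O1 V F f m \<rho>) = A + B"
  unfolding D_of[OF QO1Q] A_def B_def KE_eq W1_def
  by (simp add: O1_def comm_def acomm_def mm_simps blk blkr blkR hV sum_simps)

lemma CZ: "C (Q ** (O1 V F f m (A + B) ** Q)) = Z"
proof (rule C_unique)
  show "Q ** (Q ** (O1 V F f m (A + B) ** Q) ** Q) = Q ** (O1 V F f m (A + B) ** Q)"
    by (simp add: mm_simps blk)
  show "Q ** (Z ** Q) = Z" by (simp add: Z_def mm_simps blkR)
  show "Ksup K Z = Q ** (O1 V F f m (A + B) ** Q)"
    unfolding Z_def A_def B_def KE_eq W1_def
    apply (simp add: Ksup_def O1_def comm_def acomm_def mm_simps blk blkr blkR hV sum_simps)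
    by (rule sum.swap)
qed

lemma Pinf_r: "Pinf LL \<rho> = \<rho>"
  by (simp add: Pinf_LL mm_simps blkr C_zero S_zero)

lemma Leff_eq: "Leff H F V f m \<rho> =
   P ** ((lindblad (H + V) (\<lambda>l. F l + f l) m \<rho> - LL \<rho>) ** P)
   - S (C (Q ** ((lindblad (H + V) (\<lambda>l. F l + f l) m \<rho> - LL \<rho>) ** Q)))
   - (P ** (O1 V F f m (A + B) ** P) - S Z)"
  unfolding Leff_def Let_def Pinf_r unfolding drazin_LL DO1 Pinf_LL CZ ..

end


lemma ag: "(x::'a::ab_group_add) - y = h + s - a \<Longrightarrow> x - e - y = h + s + - e - a"
  by (simp add: algebra_simps)

context dfs2 begin

lemma fsplit: "adj (f l) ** (f l ** X) = adj (f l) ** (P ** (f l ** X)) + adj (f l) ** (Q ** (f l ** X))"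
  for X :: "'n cm"
proof -
  have "adj (f l) ** (f l ** X) = adj (f l) ** (P ** (f l ** X) + Q ** (f l ** X))"
    by (subst decomp[of "f l ** X"]) (rule refl)
  then show ?thesis by (simp only: mm_ldist)
qed

lemma QOpQ: "Q ** ((lindblad (H + V) (\<lambda>l. F l + f l) m \<rho> - LL \<rho>) ** Q) =
   (\<Sum>l<m. (Q ** f l ** P) ** \<rho> ** adj (Q ** f l ** P))"
  unfolding LLr
  by (simp add: lindblad_def diss_def comm_def acomm_def mm_simps blk blkr sum_simps)

lemma SCE: "S (C (Q ** ((lindblad (H + V) (\<lambda>l. F l + f l) m \<rho> - LL \<rho>) ** Q))) =
   (\<Sum>l<m. \<Sum>l'<m. F l' ** Ksupinv Q K ((Q ** f l ** P) ** \<rho> ** adj (Q ** f l ** P)) ** adj (F l'))"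
proof -
  have "C (\<Sum>l<m. (Q ** f l ** P) ** \<rho> ** adj (Q ** f l ** P)) =
        (\<Sum>l<m. C ((Q ** f l ** P) ** \<rho> ** adj (Q ** f l ** P)))"
    by (rule C_sum) (simp add: mm_simps blk)
  then show ?thesis unfolding QOpQ by (simp only: S_sum) (simp add: Ssup_def)
qed

lemma Heff_eq:
  "scal (1/2) (P ** V ** P - KE ** R ** KE) + scal (1/2) (adj (P ** V ** P - KE ** R ** KE)) =
   P ** V ** P - scal (1/2) (KE ** R ** KE + adj KE ** adj R ** adj KE)"
proof -
  have "adj (P ** V ** P - KE ** R ** KE) = P ** V ** P - adj KE ** adj R ** adj KE"
    by (simp add: mm_simps hV blk)
  then show ?thesis by (simp only:) (simp add: scal_def vec_eq_iff algebra_simps)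
qed

end

context dfs2 begin
lemma final_core:
  "P ** ((lindblad (H + V) (\<lambda>l. F l + f l) m \<rho> - LL \<rho>) ** P) - (P ** (O1 V F f m (A + B) ** P) - S Z)
   = scal (-\<i>) (comm (P ** V ** P - scal (1/2) (KE ** R ** KE + adj KE ** adj R ** adj KE)) \<rho>)
     + (\<Sum>l<m. diss (P ** f l ** P - F l ** R ** KE) \<rho>)
     - scal (1/2) (acomm (\<Sum>l<m. adj (Q ** f l ** P) ** (Q ** f l ** P)) \<rho>)"
proof -
  have "P ** ((lindblad (H + V) (\<lambda>l. F l + f l) m \<rho> - LL \<rho>) ** P) - (P ** (O1 V F f m (A + B) ** P) - S Z)
   - (scal (-\<i>) (comm (P ** V ** P - scal (1/2) (KE ** R ** KE + adj KE ** adj R ** adj KE)) \<rho>)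
     + (\<Sum>l<m. diss (P ** f l ** P - F l ** R ** KE) \<rho>)
     - scal (1/2) (acomm (\<Sum>l<m. adj (Q ** f l ** P) ** (Q ** f l ** P)) \<rho>)) = - CoreExpr"
    unfolding LLr
    apply (simp add: lindblad_def diss_def comm_def acomm_def O1_def A_def B_def Z_def Ssup_def
        CoreExpr_def T_def W1_def mm_simps blk blkr blkR hV sum_simps fsplit)
    done
  then show ?thesis using CoreExpr_zero by simp
qed

end


context dfs2 begin

theorem main_loc:
 "Leff H F V f m \<rho> =
  scal (-\<i>) (comm (scal (1/2) (P ** V ** P - Keff P V F f m ** Kinv Q (Kam H F m) ** Keff P V F f m)
     + scal (1/2) (adj (P ** V ** P - Keff P V F f m ** Kinv Q (Kam H F m) ** Keff P V F f m))) \<rho>) +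
  (\<Sum>l<m. diss (P ** f l ** P - F l ** Kinv Q (Kam H F m) ** Keff P V F f m) \<rho>) +
  - (\<Sum>l<m. \<Sum>l'<m. F l' ** Ksupinv Q (Kam H F m) (Q ** f l ** P ** \<rho> ** adj (Q ** f l ** P)) ** adj (F l')) -
  scal (1/2) (acomm (hs_adjoint (\<lambda>\<sigma>. - (\<Sum>l<m. \<Sum>l'<m. F l' ** Ksupinv Q (Kam H F m)
      (Q ** f l ** P ** \<sigma> ** adj (Q ** f l ** P)) ** adj (F l'))) (mat 1)) \<rho>)"
proof -
  have hs: "hs_adjoint (\<lambda>\<sigma>. - (\<Sum>l<m. \<Sum>l'<m. F l' ** Ksupinv Q K
      (Q ** f l ** P ** \<sigma> ** adj (Q ** f l ** P)) ** adj (F l'))) (mat 1)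
      = (\<Sum>l<m. adj (Q ** f l ** P) ** (Q ** f l ** P))"
    using hs_Eeff[of f] unfolding Eeff_def .
  show ?thesis
    unfolding K_def[symmetric] R_def[symmetric] KE_def[symmetric]
    unfolding Heff_eq hs Leff_eq SCE
    by (rule ag[OF final_core])
qed

end

theorem mainTheorem1:
  fixes P H V :: "complex^('n::finite)^'n" and F f :: "nat \<Rightarrow> complex^'n^'n" and m :: nat
  assumes hP: "orth_proj P"
    and hH: "hermitian H"
    and hV: "hermitian V"
    and hHQ: "H = (mat 1 - P) ** H ** (mat 1 - P)"
    and hFPQ: "\<And>l. l < m \<Longrightarrow> F l = P ** F l ** (mat 1 - P)"
    and hDFS: "\<And>\<rho>. lindblad H F m \<rho> = 0 \<longleftrightarrow> \<rho> = P ** \<rho> ** P"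
    and h\<rho>: "\<rho> = P ** \<rho> ** P"
  shows
    "let Q = mat 1 - P;
         K = Kam H F m;
         KE = Keff P V F f m;
         X = P ** V ** P - KE ** Kinv Q K ** KE;
         Heff = scal (1/2) X + scal (1/2) (adj X);
         Feff = (\<lambda>l. P ** f l ** P - F l ** Kinv Q K ** KE);
         Eeff = (\<lambda>\<sigma>. - (\<Sum>l<m. \<Sum>l'<m.
                    F l' ** Ksupinv Q K ((Q ** f l ** P) ** \<sigma> ** adj (Q ** f l ** P)) ** adj (F l')))
     in Leff H F V f m \<rho> =
          scal (-\<i>) (comm Heff \<rho>) + (\<Sum>l<m. diss (Feff l) \<rho>)
          + Eeff \<rho> - scal (1/2) (acomm (hs_adjoint Eeff (mat 1)) \<rho>)"
proof -
  define Q where "Q = mat 1 - P"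
  define F' where "F' l = P ** F l ** Q" for l
  have PP: "P ** P = P" and aP: "adj P = P" using hP by (auto simp: orth_proj_def)
  have QQ: "Q ** Q = Q" unfolding Q_def by (simp add: mm_ldiff mm_rdiff PP)
  have FF: "F' l = F l" if "l < m" for l using hFPQ[OF that] by (simp add: F'_def Q_def)
  have FPQ': "F' l = P ** F' l ** Q" for l
    by (simp add: F'_def mm_assoc QQ PP[THEN ri])
  have diss_eq: "(\<Sum>l<m. diss (F' l) X) = (\<Sum>l<m. diss (F l) X)" for X
    by (rule sum.cong) (simp_all add: FF)
  have LLeq: "lindblad H F' m = lindblad H F m"
    by (rule ext) (simp add: lindblad_def diss_eq)
  have dfs: "dfs2 P Q H F' m V \<rho>"
  proof (unfold_locales)
    show "P ** P = P" "adj P = P" by (fact PP) (fact aP)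
    show "Q = mat 1 - P" by (fact Q_def)
    show "adj H = H" using hH by (simp add: hermitian_def)
    show "H = Q ** H ** Q" using hHQ by (simp add: Q_def)
    show "F' l = P ** F' l ** Q" for l by (rule FPQ')
    show "lindblad H F' m X = 0 \<longleftrightarrow> X = P ** X ** P" for X using hDFS by (simp add: LLeq)
    show "adj V = V" using hV by (simp add: hermitian_def)
    show "\<rho> = P ** \<rho> ** P" by (fact h\<rho>)
  qed
  have M: "Leff H F' V f m \<rho> =
  scal (-\<i>) (comm (scal (1/2) (P ** V ** P - Keff P V F' f m ** Kinv Q (Kam H F' m) ** Keff P V F' f m)
     + scal (1/2) (adj (P ** V ** P - Keff P V F' f m ** Kinv Q (Kam H F' m) ** Keff P V F' f m))) \<rho>) +
  (\<Sum>l<m. diss (P ** f l ** P - F' l ** Kinv Q (Kam H F' m) ** Keff P V F' f m) \<rho>) +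
  - (\<Sum>l<m. \<Sum>l'<m. F' l' ** Ksupinv Q (Kam H F' m) (Q ** f l ** P ** \<rho> ** adj (Q ** f l ** P)) ** adj (F' l')) -
  scal (1/2) (acomm (hs_adjoint (\<lambda>\<sigma>. - (\<Sum>l<m. \<Sum>l'<m. F' l' ** Ksupinv Q (Kam H F' m)
      (Q ** f l ** P ** \<sigma> ** adj (Q ** f l ** P)) ** adj (F' l'))) (mat 1)) \<rho>)"
    by (rule dfs2.main_loc[OF dfs])
  have FF': "l \<in> {..<m} \<Longrightarrow> F' l = F l" for l using FF by simp
  have Kam_eq: "Kam H F' m = Kam H F m"
    unfolding Kam_def by (simp only: FF' cong: sum.cong)
  have Keff_eq: "Keff P V F' f m = Keff P V F f m"
    unfolding Keff_def by (simp only: FF' cong: sum.cong)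
  have O1_eq: "O1 V F' f m = O1 V F f m"
    unfolding O1_def by (rule ext) (simp only: FF' cong: sum.cong)
  have LL2: "lindblad (H + V) (\<lambda>l. F' l + f l) m = lindblad (H + V) (\<lambda>l. F l + f l) m"
    unfolding lindblad_def by (rule ext) (simp only: FF' cong: sum.cong)
  have Leff_eq: "Leff H F' V f m = Leff H F V f m"
    unfolding Leff_def by (simp only: LL2 LLeq O1_eq)
  show ?thesis
    unfolding Let_def Q_def[symmetric]
    using M unfolding Kam_eq Keff_eq Leff_eq
    by (simp only: FF' cong: sum.cong)
qed


end
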